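(* Let $X\in\mathcal{M}(N,P)$ and let $K$ be a positive integer with $K\le\min(N,P)$. For $k=1,\dots,K$ let $P(\cdot;\lambda_k):\mathbb{R}^P\to\mathbb{R}$ be an arbitrary penalty function (with hyperparameter $\lambda_k$). Consider the penalized PCA problem $$\min_{Z\in\mathcal{S}(N,K),\,L\in\mathcal{M}(P,K)}\Big(\tfrac12\|X-ZL^T\|_F^2+\sum_{k=1}^K P(l_k;\lambda_k)\Big),\qquad (\ast)$$ where $l_k$ is the $k$-th column of $L$. If $(\hat Z,\hat L)$ is a minimizer of $(\ast)$, then $$\hat L\in\operatorname*{arg\,min}_{L\in\mathcal{M}(P,K)}\Big(\tfrac12 d_*(X^TX,LL^T)^2+\sum_{k=1}^K P(l_k;\lambda_k)\Big).\qquad (\ast\ast)$$ Conversely, if $\hat L$ is a minimizer of $(\ast\ast)$ and $\hat Z=\mathrm{Polar.U}(X\hat L)$ (computed from any thin SVD of $X\hat L$), then $(\hat Z,\hat L)$ is a minimizer of $(\ast)$.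
   Context: $\mathcal{M}(N,K)$ denotes the set of real $N\times K$ matrices and $\mathcal{S}(N,K)=\{M\in\mathcal{M}(N,K): M^TM=I_K\}$. $\|\cdot\|_F$ is the Frobenius norm. For a real matrix $M$ with thin SVD $M=UDV^T$, $\mathrm{Polar.U}(M):=UV^T$. For PSD matrices $A,B$ of the same size, $d_*(A,B):=\big(\operatorname{tr}(A)-2\operatorname{tr}(\sqrt{\sqrt{A}B\sqrt{A}})+\operatorname{tr}(B)\big)^{1/2}$ (Bures–Wasserstein distance), where $\sqrt{\cdot}$ is the PSD square root. *)

theory Defs
  imports "HOL-Analysis.Analysis"
begin

definition frob_norm :: "real^'n^'m \<Rightarrow> real" where
  "frob_norm A = sqrt (\<Sum>i\<in>UNIV. \<Sum>j\<in>UNIV. (A$i$j)^2)"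

definition stiefel :: "(real^'k^'n) set" where
  "stiefel = {M. transpose M ** M = mat 1}"

definition psd :: "real^'n^'n \<Rightarrow> bool" where
  "psd A \<longleftrightarrow> transpose A = A \<and> (\<forall>x. x \<bullet> (A *v x) \<ge> 0)"

definition psd_sqrt :: "real^'n^'n \<Rightarrow> real^'n^'n" where
  "psd_sqrt A = (THE S. psd S \<and> S ** S = A)"

definition bw_dist :: "real^'n^'n \<Rightarrow> real^'n^'n \<Rightarrow> real" where
  "bw_dist A B = sqrt (trace A - 2 * trace (psd_sqrt (psd_sqrt A ** B ** psd_sqrt A)) + trace B)"

definition thin_svd :: "real^'k^'n \<Rightarrow> real^'k^'n \<Rightarrow> real^'k^'k \<Rightarrow> real^'k^'k \<Rightarrow> bool" where
  "thin_svd M U D V \<longleftrightarrow> U \<in> stiefel \<and> (\<forall>i j. i \<noteq> j \<longrightarrow> D$i$j = 0) \<and> (\<forall>i. D$i$i \<ge> 0)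
     \<and> orthogonal_matrix V \<and> M = U ** D ** transpose V"

text \<open>Objective of the penalized PCA problem (*); pen k is P(.;lambda_k).\<close>
definition obj_pca :: "real^'p^'n \<Rightarrow> ('k \<Rightarrow> real^'p \<Rightarrow> real) \<Rightarrow> real^'k^'n \<Rightarrow> real^'k^'p \<Rightarrow> real" where
  "obj_pca X pen Z L = (1/2) * (frob_norm (X - Z ** transpose L))^2 + (\<Sum>k\<in>UNIV. pen k (column k L))"

definition obj_bw :: "real^'p^'n \<Rightarrow> ('k \<Rightarrow> real^'p \<Rightarrow> real) \<Rightarrow> real^'k^'p \<Rightarrow> real" where
  "obj_bw X pen L = (1/2) * (bw_dist (transpose X ** X) (L ** transpose L))^2 + (\<Sum>k\<in>UNIV. pen k (column k L))"

definition is_min_pca :: "real^'p^'n \<Rightarrow> ('k \<Rightarrow> real^'p \<Rightarrow> real) \<Rightarrow> real^'k^'n \<Rightarrow> real^'k^'p \<Rightarrow> bool" where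
  "is_min_pca X pen Z L \<longleftrightarrow> Z \<in> stiefel \<and>
     (\<forall>Z' L'. Z' \<in> stiefel \<longrightarrow> obj_pca X pen Z L \<le> obj_pca X pen Z' L')"

definition is_min_bw :: "real^'p^'n \<Rightarrow> ('k \<Rightarrow> real^'p \<Rightarrow> real) \<Rightarrow> real^'k^'p \<Rightarrow> bool" where
  "is_min_bw X pen L \<longleftrightarrow> (\<forall>L'. obj_bw X pen L \<le> obj_bw X pen L')"

end

theory Submission
  imports Defs
begin


lemma quad_zero:
  fixes p q :: real
  assumes "\<forall>t. t*q \<le> t^2*p" shows "q = 0"
proof (rule ccontr)
  assume q: "q \<noteq> 0"
  define t where "t = q / (2*(\<bar>p\<bar>+1))"
  have h: "t*q \<le> t^2*p" using assms by blast
  have "t^2*p \<le> t^2*\<bar>p\<bar>" by (simp add: mult_left_mono)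
  moreover have "t*q = q^2/(2*(\<bar>p\<bar>+1))" by (simp add: t_def power2_eq_square)
  moreover have "t^2*\<bar>p\<bar> = q^2*\<bar>p\<bar>/(4*(\<bar>p\<bar>+1)^2)" by (simp add: t_def power_divide power_mult_distrib power2_eq_square algebra_simps)
  moreover have "q^2*\<bar>p\<bar>/(4*(\<bar>p\<bar>+1)^2) < q^2/(2*(\<bar>p\<bar>+1))"
  proof -
    have qq: "q^2 > 0" using q by simp
    have "q^2*\<bar>p\<bar>/(4*(\<bar>p\<bar>+1)^2) = (q^2/(2*(\<bar>p\<bar>+1))) * (\<bar>p\<bar>/(2*(\<bar>p\<bar>+1)))"
      by (simp add: power2_eq_square field_simps)
    also have "\<dots> < (q^2/(2*(\<bar>p\<bar>+1))) * 1"
      by (rule mult_strict_left_mono) (use qq in \<open>auto simp: field_simps\<close>)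
    finally show ?thesis by simp
  qed
  ultimately show False using h by linarith
qed

lemma circle_zero:
  fixes P Q :: real
  assumes "\<And>c s. c^2 + s^2 = 1 \<Longrightarrow> (c-1)*P + s*Q \<le> 0" shows "Q = 0"
proof -
  have "\<forall>t. t*Q \<le> t^2*P"
  proof
    fix t :: real
    define c where "c = (1-t^2)/(1+t^2)"
    define s where "s = 2*t/(1+t^2)"
    have pos: "1+t^2 > 0" by (simp add: add_pos_nonneg)
    have "c^2+s^2 = 1" unfolding c_def s_def using pos
      by (simp add: power_divide field_simps) (simp add: power2_eq_square algebra_simps)
    hence "(c-1)*P + s*Q \<le> 0" by (rule assms)
    hence "(1+t^2)*((c-1)*P + s*Q) \<le> 0" using pos by (simp add: mult_nonneg_nonpos)
    moreover have "(1+t^2)*((c-1)*P + s*Q) = -2*t^2*P + 2*t*Q"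
    proof -
      have "c - 1 = -2*t^2/(1+t^2)" unfolding c_def using pos by (simp add: field_simps)
      hence "(1+t^2)*(c-1) = -2*t^2" using pos by simp
      moreover have "s*(1+t^2) = 2*t" unfolding s_def using pos by simp
      moreover have "(1+t^2)*((c-1)*P + s*Q) = ((1+t^2)*(c-1))*P + (s*(1+t^2))*Q"
        by (simp add: algebra_simps)
      ultimately show ?thesis by simp
    qed
    ultimately show "t*Q \<le> t^2*P" by simp
  qed
  thus ?thesis by (rule quad_zero)
qed



definition cols :: "('k::finite \<Rightarrow> real^'m::finite) \<Rightarrow> real^'k^'m" where
  "cols f = (\<chi> i j. f j $ i)"

lemma column_cols[simp]: "column j (cols f) = f j"
  by (simp add: cols_def column_def vec_eq_iff)

lemma cols_column[simp]: "cols (\<lambda>j. column j Z) = Z"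
  by (simp add: cols_def column_def vec_eq_iff)

lemma stiefel_iff: "Z \<in> stiefel \<longleftrightarrow> (\<forall>a b. column a Z \<bullet> column b Z = (if a=b then 1 else 0))"
  by (simp add: stiefel_def vec_eq_iff matrix_matrix_mult_def transpose_def mat_def column_def inner_vec_def)

lemma trace_col: "trace (transpose Z ** M) = (\<Sum>j\<in>UNIV. column j Z \<bullet> column j (M::real^'k^'m))"
  by (simp add: trace_def matrix_matrix_mult_def transpose_def column_def inner_vec_def)

lemma stiefel_nonempty:
  assumes "CARD('k::finite) \<le> CARD('m::finite)"
  shows "\<exists>Z::real^'k^'m. Z \<in> stiefel"
proof -
  obtain f :: "'k \<Rightarrow> 'm" where f: "inj_on f UNIV"
    using card_le_inj[of "UNIV::'k set" "UNIV::'m set"] assms by auto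
  define Z :: "real^'k^'m" where "Z = (\<chi> i j. if i = f j then 1 else 0)"
  have "column a Z \<bullet> column b Z = (if a=b then 1 else 0)" for a b
  proof -
    have "column a Z \<bullet> column b Z = (\<Sum>i\<in>UNIV. (if i = f a then 1 else 0) * (if i = f b then 1 else 0))"
      by (simp add: Z_def column_def inner_vec_def)
    also have "\<dots> = (\<Sum>i\<in>UNIV. if i = f a then (if f a = f b then 1 else 0) else 0)"
      by (rule sum.cong) auto
    also have "\<dots> = (if a=b then 1 else 0)" using f by (simp add: inj_on_def)
    finally show ?thesis .
  qed
  hence "Z \<in> stiefel" by (simp add: stiefel_iff)
  thus ?thesis by blast
qed

lemma stiefel_entry: "Z \<in> stiefel \<Longrightarrow> \<bar>Z$i$j\<bar> \<le> 1"
proof -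
  assume "Z \<in> stiefel"
  hence "column j Z \<bullet> column j Z = 1" by (simp add: stiefel_iff)
  hence "norm (column j Z) = 1" by (simp add: norm_eq_sqrt_inner)
  moreover have "\<bar>column j Z $ i\<bar> \<le> norm (column j Z)" by (rule component_le_norm_cart)
  ultimately show ?thesis by (simp add: column_def)
qed

lemma stiefel_compact: "compact (stiefel :: (real^'k::finite^'m::finite) set)"
proof (subst compact_eq_bounded_closed, rule conjI)
  show "bounded (stiefel :: (real^'k^'m) set)"
    unfolding bounded_iff
  proof (intro exI ballI)
    fix Z :: "real^'k^'m" assume Z: "Z \<in> stiefel"
    have "norm Z \<le> (\<Sum>i\<in>UNIV. \<bar>norm (Z$i)\<bar>)" unfolding norm_vec_def by (rule L2_set_le_sum_abs)
    also have "\<dots> \<le> (\<Sum>i\<in>(UNIV::'m set). \<Sum>j\<in>(UNIV::'k set). 1)"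
    proof (rule sum_mono)
      fix i
      have "\<bar>norm (Z$i)\<bar> = norm (Z$i)" by simp
      also have "\<dots> \<le> (\<Sum>j\<in>UNIV. \<bar>Z$i$j\<bar>)" by (rule norm_le_l1_cart)
      also have "\<dots> \<le> (\<Sum>j\<in>(UNIV::'k set). 1)" by (rule sum_mono) (rule stiefel_entry[OF Z])
      finally show "\<bar>norm (Z$i)\<bar> \<le> (\<Sum>j\<in>(UNIV::'k set). 1)" .
    qed
    finally show "norm Z \<le> (\<Sum>i\<in>(UNIV::'m set). \<Sum>j\<in>(UNIV::'k set). 1)" .
  qed
  have "stiefel = (\<Inter>a. \<Inter>b. {Z::real^'k^'m. (\<Sum>i\<in>UNIV. Z$i$a * Z$i$b) = (if a=b then 1 else 0)})"
    by (auto simp: stiefel_iff column_def inner_vec_def)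
  moreover have "closed {Z::real^'k^'m. (\<Sum>i\<in>UNIV. Z$i$a * Z$i$b) = (if a=b then 1 else 0)}" for a b
    by (rule closed_Collect_eq) (intro continuous_intros)+
  ultimately show "closed (stiefel :: (real^'k^'m) set)" by (metis (no_types, lifting) closed_INT)
qed

lemma stiefel_max:
  assumes "CARD('k::finite) \<le> CARD('m::finite)"
  shows "\<exists>Z::real^'k^'m. Z \<in> stiefel \<and> (\<forall>Z'\<in>stiefel. trace (transpose Z' ** M) \<le> trace (transpose Z ** M))"
proof -
  have "continuous_on stiefel (\<lambda>Z::real^'k^'m. trace (transpose Z ** M))"
    unfolding trace_def matrix_matrix_mult_def transpose_def
    by (simp) (intro continuous_intros)
  moreover have "stiefel \<noteq> ({}::(real^'k^'m) set)" using stiefel_nonempty[OF assms] by auto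
  ultimately show ?thesis using continuous_attains_sup[OF stiefel_compact] by blast
qed



definition orthon :: "('k \<Rightarrow> real^'m) \<Rightarrow> bool" where
  "orthon f \<longleftrightarrow> (\<forall>a b. f a \<bullet> f b = (if a = b then 1 else 0))"

lemma orthon_same: "orthon f \<Longrightarrow> f a \<bullet> f a = 1" by (simp add: orthon_def)
lemma orthon_diff: "orthon f \<Longrightarrow> a \<noteq> b \<Longrightarrow> f a \<bullet> f b = 0" by (simp add: orthon_def)

lemma sum_two_delta:
  fixes g :: "'k::finite \<Rightarrow> real"
  assumes "a \<noteq> b"
  shows "(\<Sum>j\<in>UNIV. g j + (if j = a then A else 0) + (if j = b then B else 0)) = (\<Sum>j\<in>UNIV. g j) + A + B"
  by (simp add: sum.distrib)

lemma max_sym: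
  fixes z m :: "'k::finite \<Rightarrow> real^'m::finite"
  assumes on: "orthon z"
    and mx: "\<And>f. orthon f \<Longrightarrow> (\<Sum>j\<in>UNIV. f j \<bullet> m j) \<le> (\<Sum>j\<in>UNIV. z j \<bullet> m j)"
  shows "z b \<bullet> m a = z a \<bullet> m b"
proof (cases "a = b")
  case True thus ?thesis by simp
next
  case ab: False
  have "(c-1)*(z a \<bullet> m a + z b \<bullet> m b) + s*(z b \<bullet> m a - z a \<bullet> m b) \<le> 0" if cs: "c^2 + s^2 = 1" for c s
  proof -
    define f where "f j = (if j = a then c *\<^sub>R z a + s *\<^sub>R z b else if j = b then c *\<^sub>R z b - s *\<^sub>R z a else z j)" for j
    have cs': "c * c + s * s = 1" using cs by (simp add: power2_eq_square)
    have zz: "z x \<bullet> z y = (if x = y then 1 else 0)" for x y using on unfolding orthon_def by blast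
    have za: "z a \<bullet> z a = 1" "z b \<bullet> z b = 1" "z a \<bullet> z b = 0" "z b \<bullet> z a = 0"
      using ab by (simp_all add: zz)
    have zo: "z x \<bullet> z a = 0" "z x \<bullet> z b = 0" "z a \<bullet> z x = 0" "z b \<bullet> z x = 0"
      if "x \<noteq> a" "x \<noteq> b" for x using that by (auto simp: zz)
    have r1: "(c *\<^sub>R z a + s *\<^sub>R z b) \<bullet> (c *\<^sub>R z a + s *\<^sub>R z b) = 1"
      by (simp add: inner_add_left inner_add_right za cs')
    have r2: "(c *\<^sub>R z b - s *\<^sub>R z a) \<bullet> (c *\<^sub>R z b - s *\<^sub>R z a) = 1"
      by (simp add: inner_diff_left inner_diff_right za cs' add.commute)
    have r3: "(c *\<^sub>R z a + s *\<^sub>R z b) \<bullet> (c *\<^sub>R z b - s *\<^sub>R z a) = 0"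
      by (simp add: inner_add_left inner_diff_right za)
    have r4: "(c *\<^sub>R z b - s *\<^sub>R z a) \<bullet> (c *\<^sub>R z a + s *\<^sub>R z b) = 0"
      by (simp add: inner_diff_left inner_add_right za)
    have "orthon f" unfolding orthon_def
    proof (intro allI)
      fix x y
      show "f x \<bullet> f y = (if x = y then 1 else 0)"
      proof (cases "x = a \<or> x = b")
        case True
        then show ?thesis
        proof (cases "y = a \<or> y = b")
          case True
          with \<open>x = a \<or> x = b\<close> ab show ?thesis
            by (elim disjE) (simp_all add: f_def r1 r2 r3 r4)
        next
          case False
          with \<open>x = a \<or> x = b\<close> ab show ?thesis
            by (elim disjE) (auto simp: f_def inner_add_left inner_diff_left zo)
        qed
      next
        case False
        then show ?thesis
        proof (cases "y = a \<or> y = b")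
          case True
          with \<open>\<not>(x = a \<or> x = b)\<close> ab show ?thesis
            by (elim disjE) (auto simp: f_def inner_add_right inner_diff_right zo)
        next
          case False
          with \<open>\<not>(x = a \<or> x = b)\<close> ab show ?thesis
            by (simp add: f_def zz)
        qed
      qed
    qed
    hence le: "(\<Sum>j\<in>UNIV. f j \<bullet> m j) \<le> (\<Sum>j\<in>UNIV. z j \<bullet> m j)" by (rule mx)
    have "(\<Sum>j\<in>UNIV. f j \<bullet> m j) = (\<Sum>j\<in>UNIV. z j \<bullet> m j + (if j = a then (c-1)*(z a \<bullet> m a) + s*(z b \<bullet> m a) else 0)
            + (if j = b then (c-1)*(z b \<bullet> m b) - s*(z a \<bullet> m b) else 0))"
      using ab by (intro sum.cong) (auto simp: f_def inner_add_left inner_diff_left left_diff_distrib)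
    also have "\<dots> = (\<Sum>j\<in>UNIV. z j \<bullet> m j) + ((c-1)*(z a \<bullet> m a) + s*(z b \<bullet> m a)) + ((c-1)*(z b \<bullet> m b) - s*(z a \<bullet> m b))"
      by (rule sum_two_delta[OF ab])
    finally show ?thesis using le by (simp add: algebra_simps)
  qed
  hence "z b \<bullet> m a - z a \<bullet> m b = 0" by (rule circle_zero)
  thus ?thesis by simp
qed

lemma max_perp:
  fixes z m :: "'k::finite \<Rightarrow> real^'m::finite"
  assumes on: "orthon z"
    and mx: "\<And>f. orthon f \<Longrightarrow> (\<Sum>j\<in>UNIV. f j \<bullet> m j) \<le> (\<Sum>j\<in>UNIV. z j \<bullet> m j)"
    and w: "\<And>j. w \<bullet> z j = 0" "w \<bullet> w = 1"
  shows "w \<bullet> m b = 0"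
proof -
  have "(c-1)*(z b \<bullet> m b) + s*(w \<bullet> m b) \<le> 0" if cs: "c^2 + s^2 = 1" for c s
  proof -
    define f where "f j = (if j = b then c *\<^sub>R z b + s *\<^sub>R w else z j)" for j
    have cs': "c * c + s * s = 1" using cs by (simp add: power2_eq_square)
    have w': "z j \<bullet> w = 0" for j using w(1)[of j] by (simp add: inner_commute)
    have zz: "z x \<bullet> z y = (if x = y then 1 else 0)" for x y using on unfolding orthon_def by blast
    have "orthon f" unfolding orthon_def
    proof (intro allI)
      fix x y
      show "f x \<bullet> f y = (if x = y then 1 else 0)"
        using w w' by (cases "x = b"; cases "y = b")
           (auto simp: f_def inner_add_left inner_add_right zz cs')
    qed
    hence le: "(\<Sum>j\<in>UNIV. f j \<bullet> m j) \<le> (\<Sum>j\<in>UNIV. z j \<bullet> m j)" by (rule mx)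
    have "(\<Sum>j\<in>UNIV. f j \<bullet> m j) = (\<Sum>j\<in>UNIV. z j \<bullet> m j + (if j = b then (c-1)*(z b \<bullet> m b) + s*(w \<bullet> m b) else 0))"
      by (intro sum.cong) (auto simp: f_def inner_add_left left_diff_distrib)
    also have "\<dots> = (\<Sum>j\<in>UNIV. z j \<bullet> m j) + ((c-1)*(z b \<bullet> m b) + s*(w \<bullet> m b))"
      by (simp add: sum.distrib)
    finally show ?thesis using le by simp
  qed
  thus ?thesis by (rule circle_zero)
qed

lemma inner_sum_orthon:
  assumes "orthon z"
  shows "z l \<bullet> (\<Sum>j\<in>UNIV. c j *\<^sub>R z j) = c (l::'k::finite)"
proof -
  have "z l \<bullet> (\<Sum>j\<in>UNIV. c j *\<^sub>R z j) = (\<Sum>j\<in>UNIV. c j * (z l \<bullet> z j))"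
    by (simp add: inner_sum_right)
  also have "\<dots> = (\<Sum>j\<in>UNIV. if j = l then c j else 0)"
    using assms unfolding orthon_def by (intro sum.cong) auto
  finally show ?thesis by simp
qed

lemma max_range:
  fixes z m :: "'k::finite \<Rightarrow> real^'m::finite"
  assumes on: "orthon z"
    and mx: "\<And>f. orthon f \<Longrightarrow> (\<Sum>j\<in>UNIV. f j \<bullet> m j) \<le> (\<Sum>j\<in>UNIV. z j \<bullet> m j)"
  shows "m b = (\<Sum>j\<in>UNIV. (z j \<bullet> m b) *\<^sub>R z j)"
proof (rule ccontr)
  define r where "r = m b - (\<Sum>j\<in>UNIV. (z j \<bullet> m b) *\<^sub>R z j)"
  assume "m b \<noteq> (\<Sum>j\<in>UNIV. (z j \<bullet> m b) *\<^sub>R z j)"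
  hence r0: "r \<noteq> 0" by (simp add: r_def)
  have rz: "r \<bullet> z l = 0" for l
    using inner_sum_orthon[OF on, of l "\<lambda>j. z j \<bullet> m b"]
    by (simp add: r_def inner_diff_left inner_diff_right inner_commute)
  define w where "w = (1/norm r) *\<^sub>R r"
  have nr: "norm r > 0" using r0 by simp
  have w1: "w \<bullet> z j = 0" for j by (simp add: w_def rz)
  have w2: "w \<bullet> w = 1" using nr by (simp add: w_def dot_square_norm power2_eq_square)
  have "w \<bullet> m b = 0" by (rule max_perp[OF on mx w1 w2])
  moreover have "r \<bullet> m b = r \<bullet> r"
  proof -
    have "r \<bullet> (\<Sum>j\<in>UNIV. (z j \<bullet> m b) *\<^sub>R z j) = 0"
      by (simp add: inner_sum_right rz)
    thus ?thesis by (simp add: r_def inner_diff_right)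
  qed
  hence "w \<bullet> m b = norm r" using nr by (simp add: w_def dot_square_norm power2_eq_square)
  ultimately show False using nr by simp
qed



lemma max_psd:
  fixes z m :: "'k::finite \<Rightarrow> real^'m::finite"
  assumes on: "orthon z"
    and mx: "\<And>f. orthon f \<Longrightarrow> (\<Sum>j\<in>UNIV. f j \<bullet> m j) \<le> (\<Sum>j\<in>UNIV. z j \<bullet> m j)"
  shows "(\<Sum>j\<in>UNIV. v$j * (\<Sum>l\<in>UNIV. v$l * (z l \<bullet> m j))) \<ge> 0"
proof (cases "v = 0")
  case True thus ?thesis by simp
next
  case False
  have vv: "v \<bullet> v > 0" using False by simp
  define k where "k = 2 / (v \<bullet> v)"
  have k: "k > 0" "k * (v \<bullet> v) = 2" using vv by (auto simp: k_def)
  define w where "w = (\<Sum>l\<in>UNIV. v$l *\<^sub>R z l)"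
  define f where "f j = z j - (k * v$j) *\<^sub>R w" for j
  have zz: "z x \<bullet> z y = (if x = y then 1 else 0)" for x y using on unfolding orthon_def by blast
  have zw: "z j \<bullet> w = v$j" for j unfolding w_def by (rule inner_sum_orthon[OF on])
  have wz: "w \<bullet> z j = v$j" for j using zw[of j] by (simp add: inner_commute)
  have ww: "w \<bullet> w = v \<bullet> v"
  proof -
    have gen: "(\<Sum>l\<in>UNIV. v$l *\<^sub>R z l) \<bullet> u = (\<Sum>l\<in>UNIV. v$l * (z l \<bullet> u))" for u
      by (simp add: inner_sum_left)
    have "w \<bullet> w = (\<Sum>l\<in>UNIV. v$l * (z l \<bullet> w))" using gen[of w] by (simp add: w_def[symmetric])
    also have "\<dots> = (\<Sum>l\<in>UNIV. v$l * v$l)" by (simp add: zw)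
    finally show ?thesis by (simp add: inner_vec_def)
  qed
  have "orthon f" unfolding orthon_def
  proof (intro allI)
    fix x y
    have "f x \<bullet> f y = z x \<bullet> z y - (k * v$y) * v$x - (k * v$x) * v$y + (k * v$x) * (k * v$y)*(v \<bullet> v)"
      by (simp add: f_def inner_diff_left inner_diff_right zw wz ww algebra_simps)
    also have "(k * v$x) * (k * v$y)*(v \<bullet> v) = 2 * (k * v$x * v$y)"
      using k(2) by (metis (no_types, lifting) mult.assoc mult.commute)
    finally show "f x \<bullet> f y = (if x = y then 1 else 0)" by (simp add: zz)
  qed
  hence le: "(\<Sum>j\<in>UNIV. f j \<bullet> m j) \<le> (\<Sum>j\<in>UNIV. z j \<bullet> m j)" by (rule mx)
  have wm: "w \<bullet> m j = (\<Sum>l\<in>UNIV. v$l * (z l \<bullet> m j))" for j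
    by (simp add: w_def inner_sum_left)
  have "(\<Sum>j\<in>UNIV. f j \<bullet> m j) = (\<Sum>j\<in>UNIV. z j \<bullet> m j) - k * (\<Sum>j\<in>UNIV. v$j * (\<Sum>l\<in>UNIV. v$l * (z l \<bullet> m j)))"
    by (simp add: f_def inner_diff_left wm sum_subtractf sum_distrib_left mult.assoc)
  with le have "k * (\<Sum>j\<in>UNIV. v$j * (\<Sum>l\<in>UNIV. v$l * (z l \<bullet> m j))) \<ge> 0" by simp
  thus ?thesis using k(1) by (simp add: zero_le_mult_iff)
qed

lemma entry_tZM: "(transpose Z ** M) $ a $ b = column a Z \<bullet> column b (M::real^'k^'m)"
  by (simp add: matrix_matrix_mult_def transpose_def column_def inner_vec_def)

lemma polar:
  fixes M :: "real^'k::finite^'m::finite"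
  assumes "CARD('k) \<le> CARD('m)"
  shows "\<exists>Z::real^'k^'m. Z \<in> stiefel \<and> (\<forall>Z'\<in>stiefel. trace (transpose Z' ** M) \<le> trace (transpose Z ** M))
     \<and> psd (transpose Z ** M) \<and> M = Z ** (transpose Z ** M)"
proof -
  obtain Z :: "real^'k^'m" where Z: "Z \<in> stiefel" and mxZ: "\<forall>Z'\<in>stiefel. trace (transpose Z' ** M) \<le> trace (transpose Z ** M)"
    using stiefel_max[OF assms] by blast
  define z where "z j = column j Z" for j
  define m where "m j = column j M" for j
  have on: "orthon z" using Z by (simp add: stiefel_iff orthon_def z_def)
  have mx: "(\<Sum>j\<in>UNIV. f j \<bullet> m j) \<le> (\<Sum>j\<in>UNIV. z j \<bullet> m j)" if "orthon f" for f
  proof -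
    have "cols f \<in> stiefel" using that by (simp add: stiefel_iff orthon_def)
    hence "trace (transpose (cols f) ** M) \<le> trace (transpose Z ** M)" using mxZ by blast
    thus ?thesis by (simp add: trace_col z_def m_def)
  qed
  define G where "G = transpose Z ** M"
  have G: "G$a$b = z a \<bullet> m b" for a b by (simp add: G_def entry_tZM z_def m_def)
  have symG: "transpose G = G"
    by (simp add: vec_eq_iff transpose_def G max_sym[OF on mx])
  have "x \<bullet> (G *v x) \<ge> 0" for x
  proof -
    have Gs: "G$a$b = z b \<bullet> m a" for a b using G max_sym[OF on mx, of a b] by simp
    have "x \<bullet> (G *v x) = (\<Sum>j\<in>UNIV. x$j * (\<Sum>l\<in>UNIV. G$j$l * x$l))"
      by (simp add: inner_vec_def matrix_vector_mult_def)
    also have "\<dots> = (\<Sum>j\<in>UNIV. x$j * (\<Sum>l\<in>UNIV. x$l * (z l \<bullet> m j)))"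
      by (simp add: Gs mult.commute)
    finally have "x \<bullet> (G *v x) = (\<Sum>j\<in>UNIV. x$j * (\<Sum>l\<in>UNIV. x$l * (z l \<bullet> m j)))" .
    thus ?thesis using max_psd[OF on mx, of x] by simp
  qed
  hence psdG: "psd G" using symG by (simp add: psd_def)
  have "M = Z ** G"
  proof -
    have "M$i$b = (Z ** G)$i$b" for i b
    proof -
      have "M$i$b = m b $ i" by (simp add: m_def column_def)
      also have "\<dots> = (\<Sum>j\<in>UNIV. (z j \<bullet> m b) *\<^sub>R z j) $ i" using max_range[OF on mx, of b] by simp
      also have "\<dots> = (Z ** G)$i$b" by (simp add: matrix_matrix_mult_def G z_def column_def mult.commute)
      finally show ?thesis .
    qed
    thus ?thesis by (simp add: vec_eq_iff)
  qed
  thus ?thesis using Z mxZ psdG unfolding G_def by blast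
qed



lemma matrix_diff_ldistrib: "(A::real^'n^'m) ** (B - C) = A ** B - A ** C"
  by (simp add: vec_eq_iff matrix_matrix_mult_def sum_subtractf algebra_simps)

lemma matrix_diff_rdistrib: "((B::real^'n^'m) - C) ** A = B ** A - C ** A"
  by (simp add: vec_eq_iff matrix_matrix_mult_def sum_subtractf algebra_simps)

lemma sym_inner: "transpose R = R \<Longrightarrow> x \<bullet> (R *v y) = y \<bullet> ((R::real^'n^'n) *v x)"
  by (metis dot_lmul_matrix inner_commute transpose_matrix_vector)

lemma sym_entry: "transpose R = R \<Longrightarrow> R$i$k = R$k$i"
  by (metis transpose_def vec_lambda_beta)

lemma psd_zero:
  assumes R: "psd R" and x: "x \<bullet> ((R::real^'n^'n) *v x) = 0"
  shows "R *v x = 0"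
proof -
  have sym: "transpose R = R" using R by (simp add: psd_def)
  have "y \<bullet> (R *v x) = 0" for y
  proof -
    have "\<forall>t. t * (2 * (y \<bullet> (R *v x))) \<le> t^2 * (y \<bullet> (R *v y))"
    proof
      fix t :: real
      have "0 \<le> (x - t *\<^sub>R y) \<bullet> (R *v (x - t *\<^sub>R y))" using R by (simp add: psd_def)
      also have "\<dots> = x \<bullet> (R *v x) - t * (x \<bullet> (R *v y)) - t * (y \<bullet> (R *v x)) + t^2 * (y \<bullet> (R *v y))"
        by (simp add: matrix_vector_mult_diff_distrib matrix_vector_mult_scaleR inner_diff_left inner_diff_right
            power2_eq_square algebra_simps)
      also have "x \<bullet> (R *v y) = y \<bullet> (R *v x)" by (rule sym_inner[OF sym])
      finally show "t * (2 * (y \<bullet> (R *v x))) \<le> t^2 * (y \<bullet> (R *v y))" using x by simp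
    qed
    hence "2 * (y \<bullet> (R *v x)) = 0" by (rule quad_zero)
    thus ?thesis by simp
  qed
  from this[of "R *v x"] show ?thesis by simp
qed

lemma trace_TRT:
  assumes "transpose T = T"
  shows "trace (T ** (R ** T)) = (\<Sum>i\<in>UNIV. column i T \<bullet> ((R::real^'n^'n) *v column i T))"
proof -
  have Ts: "T$i$k = T$k$i" for i k using assms by (metis transpose_def vec_lambda_beta)
  show ?thesis
    by (simp add: trace_def matrix_matrix_mult_def matrix_vector_mult_def inner_vec_def column_def Ts sum_distrib_left mult.commute)
qed

lemma psd_trace_nonneg:
  assumes "psd R" "transpose T = T"
  shows "trace (T ** (R ** T)) \<ge> 0"
  unfolding trace_TRT[OF assms(2)] using assms(1) by (intro sum_nonneg) (simp add: psd_def)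

lemma psd_unique:
  assumes R1: "psd R1" and R2: "psd R2" and eq: "R1 ** R1 = (R2::real^'n^'n) ** R2"
  shows "R1 = R2"
proof -
  define T where "T = R1 - R2"
  have s1: "transpose R1 = R1" and s2: "transpose R2 = R2" using R1 R2 by (auto simp: psd_def)
  have sT: "transpose T = T"
    unfolding T_def vec_eq_iff transpose_def using sym_entry[OF s1] sym_entry[OF s2] by simp
  have "R1 ** T + T ** R2 = 0"
    using eq by (simp add: T_def matrix_diff_ldistrib matrix_diff_rdistrib matrix_mul_assoc)
  hence "T ** (R1 ** T + T ** R2) = 0" by simp
  hence "trace (T ** (R1 ** T)) + trace (T ** (T ** R2)) = 0"
    by (metis matrix_add_ldistrib trace_add trace_0 mat_0)
  moreover have "trace (T ** (T ** R2)) = trace (T ** (R2 ** T))"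
    by (metis matrix_mul_assoc trace_mul_sym)
  ultimately have "trace (T ** (R1 ** T)) + trace (T ** (R2 ** T)) = 0" by simp
  moreover have "trace (T ** (R1 ** T)) \<ge> 0" "trace (T ** (R2 ** T)) \<ge> 0"
    using psd_trace_nonneg R1 R2 sT by auto
  ultimately have z1: "trace (T ** (R1 ** T)) = 0" and z2: "trace (T ** (R2 ** T)) = 0" by linarith+
  have c1: "R1 *v column i T = 0" and c2: "R2 *v column i T = 0" for i
  proof -
    have nn1: "\<And>i. i \<in> UNIV \<Longrightarrow> column i T \<bullet> (R1 *v column i T) \<ge> 0" using R1 by (simp add: psd_def)
    have nn2: "\<And>i. i \<in> UNIV \<Longrightarrow> column i T \<bullet> (R2 *v column i T) \<ge> 0" using R2 by (simp add: psd_def)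
    have "column i T \<bullet> (R1 *v column i T) = 0"
      using sum_nonneg_eq_0_iff[of UNIV "\<lambda>i. column i T \<bullet> (R1 *v column i T)"] nn1 z1
      unfolding trace_TRT[OF sT] by simp
    thus "R1 *v column i T = 0" by (rule psd_zero[OF R1])
    have "column i T \<bullet> (R2 *v column i T) = 0"
      using sum_nonneg_eq_0_iff[of UNIV "\<lambda>i. column i T \<bullet> (R2 *v column i T)"] nn2 z2
      unfolding trace_TRT[OF sT] by simp
    thus "R2 *v column i T = 0" by (rule psd_zero[OF R2])
  qed
  have "T *v column i T = 0" for i
    using c1[of i] c2[of i] by (simp add: T_def matrix_vector_mult_diff_rdistrib)
  have Ts: "T$i$k = T$k$i" for i k using sT by (metis transpose_def vec_lambda_beta)
  have "column i T \<bullet> column i T = 0" for i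
  proof -
    have "column i T \<bullet> column i T = (T *v column i T) $ i"
      by (simp add: inner_vec_def matrix_vector_mult_def column_def Ts)
    thus ?thesis using \<open>\<And>i. T *v column i T = 0\<close> by simp
  qed
  hence "column i T = 0" for i by simp
  hence "T = 0" by (simp add: vec_eq_iff column_def)
  thus ?thesis by (simp add: T_def)
qed

lemma psd_sqrt_eq: "psd S \<Longrightarrow> S ** S = A \<Longrightarrow> psd_sqrt A = S"
  unfolding psd_sqrt_def by (rule the_equality) (auto intro: psd_unique)



lemma stiefel_tZZ: "Z \<in> stiefel \<Longrightarrow> transpose Z ** Z = mat 1"
  by (simp add: stiefel_def)

lemma psd_sym: "psd G \<Longrightarrow> transpose G = G" by (simp add: psd_def)

lemma tZZG: "Z \<in> stiefel \<Longrightarrow> psd G \<Longrightarrow> transpose (Z ** G) ** (Z ** G) = G ** G"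
proof -
  assume Z: "Z \<in> stiefel" and G: "psd G"
  have "transpose (Z ** G) ** (Z ** G) = transpose G ** ((transpose Z ** Z) ** G)"
    by (simp add: matrix_transpose_mul matrix_mul_assoc)
  thus ?thesis using stiefel_tZZ[OF Z] psd_sym[OF G] by simp
qed

lemma sqrt_exists:
  fixes X :: "real^'p::finite^'n::finite"
  shows "\<exists>S. psd S \<and> S ** S = transpose X ** X"
proof -
  define X' :: "real^'p^('n + 'p)" where "X' = (\<chi> i. case i of Inl a \<Rightarrow> X$a | Inr b \<Rightarrow> 0)"
  have card: "CARD('p) \<le> CARD('n + 'p)"
    by (rule card_inj_on_le[of Inr]) (auto simp: inj_on_def)
  obtain Z :: "real^'p^('n+'p)" where Z: "Z \<in> stiefel" and psdG: "psd (transpose Z ** X')"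
      and eq: "X' = Z ** (transpose Z ** X')"
    using polar[OF card] by blast
  have splt: "(\<Sum>i\<in>(UNIV::('n+'p) set). f i) = (\<Sum>a\<in>UNIV. f (Inl a)) + (\<Sum>b\<in>UNIV. f (Inr b))" for f :: "_ \<Rightarrow> real"
    using sum.Plus[of "UNIV::'n set" "UNIV::'p set" f] by simp
  have "transpose X' ** X' = transpose X ** X"
    by (simp add: vec_eq_iff matrix_matrix_mult_def transpose_def X'_def splt)
  moreover have "transpose X' ** X' = (transpose Z ** X') ** (transpose Z ** X')"
    using tZZG[OF Z psdG] eq by metis
  ultimately show ?thesis using psdG by metis
qed

lemma psd_sqrt_XX:
  fixes X :: "real^'p::finite^'n::finite"
  shows "psd (psd_sqrt (transpose X ** X)) \<and> psd_sqrt (transpose X ** X) ** psd_sqrt (transpose X ** X) = transpose X ** X"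
proof -
  obtain S where "psd S" "S ** S = transpose X ** X" using sqrt_exists by blast
  thus ?thesis using psd_sqrt_eq by metis
qed

lemma inner_mv_transpose: "x \<bullet> ((W::real^'k^'m) *v y) = (transpose W *v x) \<bullet> y"
  by (simp add: dot_lmul_matrix[symmetric])

lemma psd_conj:
  assumes G: "psd G" shows "psd (W ** G ** transpose (W::real^'k^'m))"
proof -
  have sG: "transpose G = G" using G by (simp add: psd_def)
  have "transpose (W ** G ** transpose W) = W ** G ** transpose W"
    by (simp add: matrix_transpose_mul sG matrix_mul_assoc)
  moreover have "x \<bullet> ((W ** G ** transpose W) *v x) \<ge> 0" for x
  proof -
    have "x \<bullet> ((W ** G ** transpose W) *v x) = (transpose W *v x) \<bullet> (G *v (transpose W *v x))"
      by (simp add: matrix_vector_mul_assoc[symmetric] inner_mv_transpose)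
    thus ?thesis using G by (simp add: psd_def)
  qed
  ultimately show ?thesis by (simp add: psd_def)
qed

lemma diag_transpose: "(\<forall>i j. i \<noteq> j \<longrightarrow> D$i$j = 0) \<Longrightarrow> transpose D = (D::real^'k^'k)"
  unfolding vec_eq_iff transpose_def by (metis vec_lambda_beta)

lemma psd_diag:
  assumes "\<forall>i j. i \<noteq> j \<longrightarrow> D$i$j = 0" "\<forall>i. D$i$i \<ge> 0"
  shows "psd (D::real^'k::finite^'k)"
proof -
  have "y \<bullet> (D *v y) \<ge> 0" for y
  proof -
    have "y \<bullet> (D *v y) = (\<Sum>i\<in>UNIV. y$i * (\<Sum>j\<in>UNIV. if j = i then D$i$i * y$j else 0))"
      unfolding inner_vec_def matrix_vector_mult_def vec_lambda_beta inner_real_def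
      using assms(1) by (intro sum.cong refl arg_cong2[where f="(*)"]) auto
    also have "\<dots> = (\<Sum>i\<in>UNIV. D$i$i * (y$i * y$i))" by (simp add: algebra_simps)
    also have "\<dots> \<ge> 0" using assms(2) by (intro sum_nonneg) simp
    finally show ?thesis .
  qed
  thus ?thesis using diag_transpose[OF assms(1)] by (simp add: psd_def)
qed

lemma orth_tVV: "orthogonal_matrix V \<Longrightarrow> transpose V ** V = mat 1 \<and> V ** transpose V = (mat 1::real^'k^'k)"
  by (simp add: orthogonal_matrix_def)



lemma key:
  fixes X :: "real^'p::finite^'n::finite" and L :: "real^'k::finite^'p"
  assumes c1: "CARD('k) \<le> CARD('n)" and c2: "CARD('k) \<le> CARD('p)"
  shows "\<exists>Z0. Z0 \<in> stiefel \<and> (\<forall>Z\<in>stiefel. trace (transpose Z ** (X ** L)) \<le> trace (transpose Z0 ** (X ** L)))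
     \<and> trace (psd_sqrt (psd_sqrt (transpose X ** X) ** (L ** transpose L) ** psd_sqrt (transpose X ** X)))
         = trace (transpose Z0 ** (X ** L))
     \<and> (\<forall>U D V. thin_svd (X ** L) U D V \<longrightarrow> trace (transpose (U ** transpose V) ** (X ** L)) = trace (transpose Z0 ** (X ** L)))"
proof -
  define S where "S = psd_sqrt (transpose X ** X)"
  have pS: "psd S" and SS: "S ** S = transpose X ** X" using psd_sqrt_XX[of X] by (auto simp: S_def)
  have sS: "transpose S = S" using pS by (rule psd_sym)
  obtain Z0 :: "real^'k^'n" where Z0: "Z0 \<in> stiefel"
    and mx: "\<forall>Z\<in>stiefel. trace (transpose Z ** (X ** L)) \<le> trace (transpose Z0 ** (X ** L))"
    and pG0: "psd (transpose Z0 ** (X ** L))" and e0: "X ** L = Z0 ** (transpose Z0 ** (X ** L))"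
    using polar[OF c1, of "X ** L"] by blast
  define G0 where "G0 = transpose Z0 ** (X ** L)"
  obtain W :: "real^'k^'p" where W: "W \<in> stiefel"
    and pG1: "psd (transpose W ** (S ** L))" and e1: "S ** L = W ** (transpose W ** (S ** L))"
    using polar[OF c2, of "S ** L"] by blast
  define G1 where "G1 = transpose W ** (S ** L)"
  have pG0': "psd G0" and e0': "X ** L = Z0 ** G0" using pG0 e0 by (simp_all add: G0_def)
  have pG1': "psd G1" and e1': "S ** L = W ** G1" using pG1 e1 by (simp_all add: G1_def)
  have sG1: "transpose G1 = G1" using pG1' by (rule psd_sym)
  have XLXL: "transpose (X ** L) ** (X ** L) = transpose L ** (transpose X ** X) ** L"
    by (simp add: matrix_transpose_mul matrix_mul_assoc)
  have SLSL: "transpose (S ** L) ** (S ** L) = transpose L ** (S ** S) ** L"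
    by (simp add: matrix_transpose_mul matrix_mul_assoc sS)
  have "G0 ** G0 = transpose (X ** L) ** (X ** L)" using tZZG[OF Z0 pG0'] e0' by simp
  moreover have "G1 ** G1 = transpose (S ** L) ** (S ** L)" using tZZG[OF W pG1'] e1' by simp
  ultimately have "G0 ** G0 = G1 ** G1" using XLXL SLSL SS by simp
  hence G01: "G0 = G1" using psd_unique[OF pG0' pG1'] by simp
  define R where "R = W ** G1 ** transpose W"
  have pR: "psd R" unfolding R_def by (rule psd_conj[OF pG1'])
  have tWW: "transpose W ** W = mat 1" by (rule stiefel_tZZ[OF W])
  have "R ** R = (W ** G1) ** ((transpose W ** W) ** (G1 ** transpose W))"
    by (simp add: R_def matrix_mul_assoc)
  also have "\<dots> = (W ** G1) ** (G1 ** transpose W)" by (simp add: tWW)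
  also have "\<dots> = (S ** L) ** transpose (S ** L)" by (simp add: e1' matrix_transpose_mul sG1)
  also have "\<dots> = S ** (L ** transpose L) ** S" by (simp add: matrix_transpose_mul sS matrix_mul_assoc)
  finally have "psd_sqrt (S ** (L ** transpose L) ** S) = R" using psd_sqrt_eq[OF pR] by simp
  moreover have "trace R = trace G1"
  proof -
    have "trace R = trace (transpose W ** (W ** G1))" unfolding R_def by (rule trace_mul_sym)
    also have "\<dots> = trace G1" by (simp add: matrix_mul_assoc tWW)
    finally show ?thesis .
  qed
  ultimately have tr1: "trace (psd_sqrt (S ** (L ** transpose L) ** S)) = trace (transpose Z0 ** (X ** L))"
    using G01 by (simp add: G0_def)
  have svd: "trace (transpose (U ** transpose V) ** (X ** L)) = trace (transpose Z0 ** (X ** L))"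
    if "thin_svd (X ** L) U D V" for U D V
  proof -
    have U: "U \<in> stiefel" and dg: "\<forall>i j. i \<noteq> j \<longrightarrow> D$i$j = 0" and dn: "\<forall>i. D$i$i \<ge> 0"
      and V: "orthogonal_matrix V" and eU: "X ** L = U ** D ** transpose V"
      using that by (auto simp: thin_svd_def)
    have tUU: "transpose U ** U = mat 1" by (rule stiefel_tZZ[OF U])
    have tVV: "transpose V ** V = mat 1" using orth_tVV[OF V] by simp
    have sD: "transpose D = D" by (rule diag_transpose[OF dg])
    define G2 where "G2 = V ** D ** transpose V"
    have pG2: "psd G2" unfolding G2_def by (rule psd_conj[OF psd_diag[OF dg dn]])
    have "G2 ** G2 = (V ** D) ** ((transpose V ** V) ** (D ** transpose V))"
      by (simp add: G2_def matrix_mul_assoc)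
    also have "\<dots> = (V ** D) ** ((transpose U ** U) ** (D ** transpose V))" by (simp add: tVV tUU)
    also have "\<dots> = transpose (X ** L) ** (X ** L)"
      by (simp add: eU matrix_transpose_mul sD matrix_mul_assoc)
    also have "\<dots> = G0 ** G0" using tZZG[OF Z0 pG0'] e0' by simp
    finally have "G2 = G0" using psd_unique[OF pG2 pG0'] by simp
    moreover have "transpose (U ** transpose V) ** (X ** L) = G2"
    proof -
      have "transpose (U ** transpose V) ** (X ** L) = V ** ((transpose U ** U) ** (D ** transpose V))"
        by (simp add: eU matrix_transpose_mul matrix_mul_assoc)
      thus ?thesis by (simp add: tUU G2_def matrix_mul_assoc)
    qed
    ultimately show ?thesis by (simp add: G0_def)
  qed
  show ?thesis using Z0 mx tr1 svd unfolding S_def by blast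
qed

lemma trace_transpose: "trace (transpose A) = trace (A::real^'n^'n)"
  by (simp add: trace_def transpose_def)

lemma frob_sq: "(frob_norm B)^2 = trace (transpose B ** B)"
proof -
  have "(frob_norm B)^2 = (\<Sum>i\<in>UNIV. \<Sum>j\<in>UNIV. (B$i$j)^2)"
    unfolding frob_norm_def by (simp add: sum_nonneg)
  also have "\<dots> = trace (transpose B ** B)"
    by (simp add: trace_def matrix_matrix_mult_def transpose_def power2_eq_square) (rule sum.swap)
  finally show ?thesis .
qed

lemma transpose_diff: "transpose (A - B) = transpose A - transpose (B::real^'n^'m)"
  by (simp add: vec_eq_iff transpose_def)

lemma obj_expand:
  fixes X :: "real^'p::finite^'n::finite" and L :: "real^'k::finite^'p" and Z :: "real^'k^'n"
  assumes Z: "Z \<in> stiefel"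
  shows "(frob_norm (X - Z ** transpose L))^2
     = trace (transpose X ** X) - 2 * trace (transpose Z ** (X ** L)) + trace (L ** transpose L)"
proof -
  have tZZ: "transpose Z ** Z = mat 1" by (rule stiefel_tZZ[OF Z])
  have "transpose (X - Z ** transpose L) ** (X - Z ** transpose L)
     = transpose X ** X - transpose X ** (Z ** transpose L) - (L ** transpose Z) ** X + (L ** transpose Z) ** (Z ** transpose L)"
    by (simp add: transpose_diff matrix_transpose_mul matrix_diff_ldistrib matrix_diff_rdistrib)
  moreover have "trace (transpose X ** (Z ** transpose L)) = trace (transpose Z ** (X ** L))"
  proof -
    have "trace (transpose X ** (Z ** transpose L)) = trace (transpose (transpose X ** (Z ** transpose L)))"
      by (simp add: trace_transpose)
    also have "\<dots> = trace (L ** (transpose Z ** X))" by (simp add: matrix_transpose_mul matrix_mul_assoc)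
    also have "\<dots> = trace ((transpose Z ** X) ** L)" by (rule trace_mul_sym)
    finally show ?thesis by (simp add: matrix_mul_assoc)
  qed
  moreover have "trace ((L ** transpose Z) ** X) = trace (transpose Z ** (X ** L))"
  proof -
    have "trace ((L ** transpose Z) ** X) = trace (L ** (transpose Z ** X))" by (simp add: matrix_mul_assoc)
    also have "\<dots> = trace ((transpose Z ** X) ** L)" by (rule trace_mul_sym)
    finally show ?thesis by (simp add: matrix_mul_assoc)
  qed
  moreover have "(L ** transpose Z) ** (Z ** transpose L) = L ** transpose L"
  proof -
    have "(L ** transpose Z) ** (Z ** transpose L) = L ** ((transpose Z ** Z) ** transpose L)"
      by (simp add: matrix_mul_assoc)
    thus ?thesis by (simp add: tZZ)
  qed
  ultimately show ?thesis by (simp add: frob_sq trace_add trace_sub)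
qed



lemma bw_obj:
  fixes X :: "real^'p::finite^'n::finite" and L :: "real^'k::finite^'p" and pen :: "'k \<Rightarrow> real^'p \<Rightarrow> real"
  assumes c1: "CARD('k) \<le> CARD('n)" and c2: "CARD('k) \<le> CARD('p)"
  shows "\<exists>Z0. Z0 \<in> stiefel \<and> obj_bw X pen L = obj_pca X pen Z0 L
     \<and> (\<forall>Z\<in>stiefel. obj_pca X pen Z0 L \<le> obj_pca X pen Z L)
     \<and> (\<forall>U D V. thin_svd (X ** L) U D V \<longrightarrow> obj_pca X pen (U ** transpose V) L = obj_pca X pen Z0 L)"
proof -
  obtain Z0 where Z0: "Z0 \<in> stiefel"
    and mx: "\<forall>Z\<in>stiefel. trace (transpose Z ** (X ** L)) \<le> trace (transpose Z0 ** (X ** L))"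
    and tr: "trace (psd_sqrt (psd_sqrt (transpose X ** X) ** (L ** transpose L) ** psd_sqrt (transpose X ** X)))
         = trace (transpose Z0 ** (X ** L))"
    and svd: "\<forall>U D V. thin_svd (X ** L) U D V \<longrightarrow> trace (transpose (U ** transpose V) ** (X ** L)) = trace (transpose Z0 ** (X ** L))"
    using key[OF c1 c2, of X L] by blast
  have e0: "(frob_norm (X - Z0 ** transpose L))^2
     = trace (transpose X ** X) - 2 * trace (transpose Z0 ** (X ** L)) + trace (L ** transpose L)"
    by (rule obj_expand[OF Z0])
  have "(bw_dist (transpose X ** X) (L ** transpose L))^2 = (frob_norm (X - Z0 ** transpose L))^2"
    unfolding bw_dist_def tr e0[symmetric] by simp
  hence eq: "obj_bw X pen L = obj_pca X pen Z0 L" by (simp add: obj_bw_def obj_pca_def)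
  have le: "obj_pca X pen Z0 L \<le> obj_pca X pen Z L" if Z: "Z \<in> stiefel" for Z
    using obj_expand[OF Z, of X L] e0 mx Z by (simp add: obj_pca_def)
  have sv: "obj_pca X pen (U ** transpose V) L = obj_pca X pen Z0 L" if "thin_svd (X ** L) U D V" for U D V
  proof -
    have U: "U \<in> stiefel" and V: "orthogonal_matrix V" using that by (auto simp: thin_svd_def)
    have "transpose (U ** transpose V) ** (U ** transpose V) = V ** ((transpose U ** U) ** transpose V)"
      by (simp add: matrix_transpose_mul matrix_mul_assoc)
    also have "\<dots> = mat 1" using stiefel_tZZ[OF U] orth_tVV[OF V] by simp
    finally have UV: "U ** transpose V \<in> stiefel" by (simp add: stiefel_def)
    show ?thesis using obj_expand[OF UV, of X L] e0 svd that by (simp add: obj_pca_def)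
  qed
  show ?thesis using Z0 eq le sv by blast
qed

theorem theorem1:
  fixes X :: "real^'p::finite^'n::finite"
    and pen :: "'k::finite \<Rightarrow> real^'p \<Rightarrow> real"
    and Zh :: "real^'k^'n" and Lh :: "real^'k^'p"
  assumes "CARD('k) \<le> CARD('n)" and "CARD('k) \<le> CARD('p)"
  shows "(is_min_pca X pen Zh Lh \<longrightarrow> is_min_bw X pen Lh)
    \<and> (\<forall>U D V. is_min_bw X pen Lh \<and> thin_svd (X ** Lh) U D V
          \<longrightarrow> is_min_pca X pen (U ** transpose V) Lh)"
proof (intro conjI impI allI)
  note B = bw_obj[OF assms, where X=X and pen=pen]
  obtain Z0 where Z0: "Z0 \<in> stiefel" and eq0: "obj_bw X pen Lh = obj_pca X pen Z0 Lh"
    and le0: "\<forall>Z\<in>stiefel. obj_pca X pen Z0 Lh \<le> obj_pca X pen Z Lh"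
    and sv0: "\<forall>U D V. thin_svd (X ** Lh) U D V \<longrightarrow> obj_pca X pen (U ** transpose V) Lh = obj_pca X pen Z0 Lh"
    using B[of Lh] by blast
  {
    assume h: "is_min_pca X pen Zh Lh"
    show "is_min_bw X pen Lh" unfolding is_min_bw_def
    proof
      fix L'
      obtain Z' where Z': "Z' \<in> stiefel" and eq': "obj_bw X pen L' = obj_pca X pen Z' L'"
        using B[of L'] by blast
      have "obj_bw X pen Lh \<le> obj_pca X pen Zh Lh" using eq0 le0 h by (simp add: is_min_pca_def)
      also have "\<dots> \<le> obj_pca X pen Z' L'" using h Z' by (simp add: is_min_pca_def)
      finally show "obj_bw X pen Lh \<le> obj_bw X pen L'" using eq' by simp
    qed
  }
  fix U D V
  assume h: "is_min_bw X pen Lh \<and> thin_svd (X ** Lh) U D V"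
  have UV: "U ** transpose V \<in> stiefel"
  proof -
    have U: "U \<in> stiefel" and V: "orthogonal_matrix V" using h by (auto simp: thin_svd_def)
    have "transpose (U ** transpose V) ** (U ** transpose V) = V ** ((transpose U ** U) ** transpose V)"
      by (simp add: matrix_transpose_mul matrix_mul_assoc)
    also have "\<dots> = mat 1" using stiefel_tZZ[OF U] orth_tVV[OF V] by simp
    finally show ?thesis by (simp add: stiefel_def)
  qed
  show "is_min_pca X pen (U ** transpose V) Lh" unfolding is_min_pca_def
  proof (intro conjI UV allI impI)
    fix Z' :: "real^'k^'n" and L' :: "real^'k^'p" assume Z': "Z' \<in> stiefel"
    obtain Z1 where eq1: "obj_bw X pen L' = obj_pca X pen Z1 L'"
      and le1: "\<forall>Z\<in>stiefel. obj_pca X pen Z1 L' \<le> obj_pca X pen Z L'"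
      using B[of L'] by blast
    have "obj_pca X pen (U ** transpose V) Lh = obj_bw X pen Lh" using sv0 h eq0 by metis
    also have "\<dots> \<le> obj_bw X pen L'" using h by (simp add: is_min_bw_def)
    also have "\<dots> \<le> obj_pca X pen Z' L'" using eq1 le1 Z' by simp
    finally show "obj_pca X pen (U ** transpose V) Lh \<le> obj_pca X pen Z' L'" .
  qed
qed

end
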